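(* Let $p \ge 1$ be an integer, let $u_L \neq u_R$ be real numbers, let $c \neq 0$ be a real constant, and let $S:\mathbb{R}\to\mathbb{R}$ be a measurable function. For each grid spacing $h>0$ define the width $w_h = c\,h^{p/(p+1)}$ and the profile $$u_h(z) = \frac{u_L+u_R}{2} + \frac{u_R-u_L}{2}\, S\!\left(\frac{z}{w_h}\right), \qquad z \in \mathbb{R}.$$ For $\rho>0$ set $I(\rho) = \int_{-\infty}^{\infty} \left| S(\chi) - S(\rho\chi)\right|\,d\chi$. Let $h_1>0$ and $0<r<1$, and set $h_2 = r h_1$, $h_3 = r^2 h_1$. Assume $0 < I(r^{-p/(p+1)}) < \infty$. Then, with $\|\cdot\|$ the $L_1(\mathbb{R})$ norm, $$\frac{\|u_{h_1}-u_{h_2}\|}{\|u_{h_2}-u_{h_3}\|} = \left(\frac{h_1}{h_2}\right)^{p/(p+1)} = r^{-p/(p+1)},$$ and consequently $\sigma = p/(p+1)$ is the unique real $\sigma \neq 0$ satisfying $$\frac{\|u_{h_1}-u_{h_2}\|}{\|u_{h_2}-u_{h_3}\|} = \frac{|h_1^\sigma - h_2^\sigma|}{|h_2^\sigma - h_3^\sigma|}.$$ That is, the Richardson-extrapolation convergence-rate estimate $\mathcal{R}(u_{h_1},u_{rh_1},u_{r^2h_1})$ equals $p/(p+1)$, independently of the profile $S$.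
   Context: Setting: linear advection $u_t + a u_x = 0$ with jump initial data ($u=u_L$ for $x<0$, $u=u_R$ for $x\ge 0$), approximated by a (noncompressive, stable) $p$-th order scheme with grid spacing $h$. The scheme's modified equation, truncated and written in the moving frame $z = x - at$, is $U_\tau - \kappa_h U_{zzz\cdots}=0$ (a $(p+1)$-st $z$-derivative) with $\kappa_h = \tilde\kappa h^p$, whose solution at the final time $t_f$ is self-similar in $\xi_h = z/(\kappa_h t_f)^{1/(p+1)}$; this gives the form $u_h(z)=\frac{u_L+u_R}{2}+\frac{u_R-u_L}{2}S(\xi_h)$ with $w_h=(\tilde\kappa t_f)^{1/(p+1)} h^{p/(p+1)}$ (real $(p+1)$-th root), which is taken as the model of the numerical solution at resolution $h$. Richardson convergence-rate estimate: for three approximations $u_{h_1},u_{h_2},u_{h_3}$, $\mathcal{R}(u_{h_1},u_{h_2},u_{h_3})$ denotes the solution $\sigma$ of $\frac{\|u_{h_1}-u_{h_2}\|}{\|u_{h_2}-u_{h_3}\|} = \frac{|h_1^\sigma-h_2^\sigma|}{|h_2^\sigma-h_3^\sigma|}$, where $\|\cdot\|$ is the $L_1$ norm. *)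

theory Defs
  imports "HOL-Analysis.Analysis"
begin

text \<open>L1(R) norm of a real function, via the nonnegative Lebesgue integral
  (returned as an extended nonnegative real, so that infinite norms are not
  silently mapped to a finite value).\<close>
definition L1norm :: "(real \<Rightarrow> real) \<Rightarrow> ennreal" where
  "L1norm f = (\<integral>\<^sup>+ z. ennreal \<bar>f z\<bar> \<partial>lborel)"

definition width :: "real \<Rightarrow> nat \<Rightarrow> real \<Rightarrow> real" where
  "width c p h = c * h powr (real p / (real p + 1))"

definition profile ::
  "(real \<Rightarrow> real) \<Rightarrow> real \<Rightarrow> real \<Rightarrow> real \<Rightarrow> nat \<Rightarrow> real \<Rightarrow> real \<Rightarrow> real" where
  "profile S uL uR c p h z = (uL + uR) / 2 + (uR - uL) / 2 * S (z / width c p h)"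

definition Iint :: "(real \<Rightarrow> real) \<Rightarrow> real \<Rightarrow> ennreal" where
  "Iint S \<rho> = (\<integral>\<^sup>+ x. ennreal \<bar>S x - S (\<rho> * x)\<bar> \<partial>lborel)"

text \<open>Richardson convergence-rate estimate R(u1,u2,u3) for resolutions h1,h2,h3:
  the (nonzero) sigma solving the Richardson equation.\<close>
definition richardson_eq :: "real \<Rightarrow> real \<Rightarrow> real \<Rightarrow> real \<Rightarrow> real \<Rightarrow> bool" where
  "richardson_eq q h1 h2 h3 \<sigma> \<longleftrightarrow>
     q = \<bar>h1 powr \<sigma> - h2 powr \<sigma>\<bar> / \<bar>h2 powr \<sigma> - h3 powr \<sigma>\<bar>"

end

theory Submission imports Defs begin

lemma key:
  fixes S :: "real \<Rightarrow> real" and K w v :: real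
  assumes S[measurable]: "S \<in> borel_measurable borel" and w: "w \<noteq> 0" and v: "v \<noteq> 0"
  shows "L1norm (\<lambda>z. K * (S (z / w) - S (z / v))) = ennreal (\<bar>K\<bar> * \<bar>w\<bar>) * Iint S (w / v)"
proof -
  have "L1norm (\<lambda>z. K * (S (z / w) - S (z / v)))
      = ennreal \<bar>w\<bar> * (\<integral>\<^sup>+x. ennreal \<bar>K * (S ((0 + w * x) / w) - S ((0 + w * x) / v))\<bar> \<partial>lborel)"
    unfolding L1norm_def
    by (rule nn_integral_real_affine[OF _ w]) measurable
  also have "(\<lambda>x. ennreal \<bar>K * (S ((0 + w * x) / w) - S ((0 + w * x) / v))\<bar>)
      = (\<lambda>x. ennreal \<bar>K\<bar> * ennreal \<bar>S x - S (w / v * x)\<bar>)"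
    using w by (auto simp: abs_mult ennreal_mult[symmetric])
  also have "(\<integral>\<^sup>+x. ennreal \<bar>K\<bar> * ennreal \<bar>S x - S (w / v * x)\<bar> \<partial>lborel)
      = ennreal \<bar>K\<bar> * Iint S (w / v)"
    unfolding Iint_def by (rule nn_integral_cmult) measurable
  finally show ?thesis
    by (simp add: ennreal_mult mult.assoc mult.left_commute)
qed
theorem mainTheorem1:
  fixes p :: nat and uL uR c h1 r :: real and S :: "real \<Rightarrow> real"
  assumes "p \<ge> 1" and "uL \<noteq> uR" and "c \<noteq> 0"
    and "S \<in> borel_measurable borel"
    and "h1 > 0" and "0 < r" and "r < 1"
    and "0 < Iint S (r powr (- real p / (real p + 1)))"
    and "Iint S (r powr (- real p / (real p + 1))) < \<infinity>"
  defines "u \<equiv> profile S uL uR c p"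
    and "h2 \<equiv> r * h1" and "h3 \<equiv> r\<^sup>2 * h1"
  shows "L1norm (\<lambda>z. u h1 z - u h2 z) < \<infinity> \<and>
         0 < L1norm (\<lambda>z. u h2 z - u h3 z) \<and>
         L1norm (\<lambda>z. u h2 z - u h3 z) < \<infinity> \<and>
         enn2real (L1norm (\<lambda>z. u h1 z - u h2 z)) / enn2real (L1norm (\<lambda>z. u h2 z - u h3 z))
           = (h1 / h2) powr (real p / (real p + 1)) \<and>
         (h1 / h2) powr (real p / (real p + 1)) = r powr (- real p / (real p + 1)) \<and>
         (\<forall>\<sigma>. \<sigma> \<noteq> 0 \<longrightarrow>
           (richardson_eq (enn2real (L1norm (\<lambda>z. u h1 z - u h2 z)) /
                           enn2real (L1norm (\<lambda>z. u h2 z - u h3 z))) h1 h2 h3 \<sigma>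
            \<longleftrightarrow> \<sigma> = real p / (real p + 1)))"
proof -
  define a where "a = real p / (real p + 1)"
  define K where "K = (uR - uL) / 2"
  define I where "I = Iint S (r powr (- real p / (real p + 1)))"
  have ma: "- real p / (real p + 1) = - a" unfolding a_def by simp
  have Kne: "K \<noteq> 0" using assms(2) unfolding K_def by simp
  obtain i where i: "I = ennreal i" "i > 0"
    using assms(8,9) unfolding I_def[symmetric]
    by (metis ennreal_cases ennreal_less_zero_iff infinity_ennreal_def less_irrefl top.not_eq_extremum)
  define w1 where "w1 = width c p h1"
  define w2 where "w2 = width c p h2"
  define w3 where "w3 = width c p h3"
  have h2: "h2 > 0" "h3 > 0" using assms unfolding h2_def h3_def by auto
  have w2e: "w2 = r powr a * w1" unfolding w1_def w2_def width_def h2_def a_def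
    using assms by (simp add: powr_mult)
  have w3e: "w3 = r powr a * w2" unfolding w3_def w2_def width_def h2_def h3_def a_def
    using assms by (simp add: powr_mult power2_eq_square)
  have w1ne: "w1 \<noteq> 0" unfolding w1_def width_def using assms by simp
  have rpa: "r powr a > 0" using assms by simp
  have w2ne: "w2 \<noteq> 0" using w2e w1ne rpa by simp
  have w3ne: "w3 \<noteq> 0" using w3e w2ne rpa by simp
  have q1: "w1 / w2 = r powr (- a)" using w2e w1ne rpa by (simp add: powr_minus field_simps)
  have q2: "w2 / w3 = r powr (- a)" using w3e w2ne rpa by (simp add: powr_minus field_simps)
  have d: "\<And>x y z. u x z - u y z = K * (S (z / width c p x) - S (z / width c p y))"
    unfolding u_def profile_def K_def by (simp add: algebra_simps)
  have N1: "L1norm (\<lambda>z. u h1 z - u h2 z) = ennreal (\<bar>K\<bar> * \<bar>w1\<bar> * i)"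
    unfolding d w1_def[symmetric] w2_def[symmetric]
    using key[OF assms(4) w1ne w2ne, of K] q1 i I_def ma
    by (simp add: ennreal_mult)
  have N2: "L1norm (\<lambda>z. u h2 z - u h3 z) = ennreal (\<bar>K\<bar> * \<bar>w2\<bar> * i)"
    unfolding d w3_def[symmetric] w2_def[symmetric]
    using key[OF assms(4) w2ne w3ne, of K] q2 i I_def ma
    by (simp add: ennreal_mult)
  have pos1: "\<bar>K\<bar> * \<bar>w1\<bar> * i > 0" using Kne w1ne i by simp
  have pos2: "\<bar>K\<bar> * \<bar>w2\<bar> * i > 0" using Kne w2ne i by simp
  have ratio: "enn2real (L1norm (\<lambda>z. u h1 z - u h2 z)) / enn2real (L1norm (\<lambda>z. u h2 z - u h3 z))
     = r powr (- a)"
  proof -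
    have "enn2real (L1norm (\<lambda>z. u h1 z - u h2 z)) / enn2real (L1norm (\<lambda>z. u h2 z - u h3 z))
       = (\<bar>K\<bar> * \<bar>w1\<bar> * i) / (\<bar>K\<bar> * \<bar>w2\<bar> * i)"
      using N1 N2 pos1 pos2 by simp
    also have "\<dots> = \<bar>w1\<bar> / \<bar>w2\<bar>" using Kne i by simp
    also have "\<dots> = r powr (- a)" using q1 abs_divide[of w1 w2] by simp
    finally show ?thesis .
  qed
  have hr: "(h1 / h2) powr a = r powr (- a)"
    unfolding h2_def using assms by (simp add: powr_minus powr_divide inverse_eq_divide)
  have rich: "\<And>\<sigma>. \<sigma> \<noteq> 0 \<Longrightarrow> \<bar>h1 powr \<sigma> - h2 powr \<sigma>\<bar> / \<bar>h2 powr \<sigma> - h3 powr \<sigma>\<bar> = r powr (- \<sigma>)"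
  proof -
    fix \<sigma> :: real assume s: "\<sigma> \<noteq> 0"
    have rs: "r powr \<sigma> \<noteq> 1" using s assms(6,7)
      by (metis powr_inj powr_zero_eq_one less_irrefl)
    have e1: "h1 powr \<sigma> - h2 powr \<sigma> = h1 powr \<sigma> * (1 - r powr \<sigma>)"
      unfolding h2_def using assms by (simp add: powr_mult algebra_simps)
    have e2: "h2 powr \<sigma> - h3 powr \<sigma> = r powr \<sigma> * (h1 powr \<sigma> * (1 - r powr \<sigma>))"
      unfolding h2_def h3_def using assms
      by (simp add: powr_mult algebra_simps power2_eq_square)
    have "h1 powr \<sigma> * (1 - r powr \<sigma>) \<noteq> 0" using rs assms by simp
    then show "\<bar>h1 powr \<sigma> - h2 powr \<sigma>\<bar> / \<bar>h2 powr \<sigma> - h3 powr \<sigma>\<bar> = r powr (- \<sigma>)"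
    proof -
      let ?X = "h1 powr \<sigma> * (1 - r powr \<sigma>)"
      have "\<bar>?X\<bar> / \<bar>r powr \<sigma> * ?X\<bar> = \<bar>?X\<bar> / (r powr \<sigma> * \<bar>?X\<bar>)"
        using assms by (simp only: abs_mult) simp
      also have "\<dots> = 1 / r powr \<sigma>" using \<open>?X \<noteq> 0\<close> assms by simp
      finally show ?thesis unfolding e1 e2 by (simp add: powr_minus inverse_eq_divide)
    qed
  qed
  show ?thesis
    unfolding a_def[symmetric] ma
  proof (intro conjI allI impI)
    show "L1norm (\<lambda>z. u h1 z - u h2 z) < \<infinity>" using N1 by simp
    show "0 < L1norm (\<lambda>z. u h2 z - u h3 z)" using N2 pos2 by simp
    show "L1norm (\<lambda>z. u h2 z - u h3 z) < \<infinity>" using N2 by simp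
    show "enn2real (L1norm (\<lambda>z. u h1 z - u h2 z)) / enn2real (L1norm (\<lambda>z. u h2 z - u h3 z)) =
      (h1 / h2) powr a" using ratio hr by simp
    show "(h1 / h2) powr a = r powr - a" by (rule hr)
    fix \<sigma> :: real assume s: "\<sigma> \<noteq> 0"
    show "richardson_eq (enn2real (L1norm (\<lambda>z. u h1 z - u h2 z)) /
                           enn2real (L1norm (\<lambda>z. u h2 z - u h3 z))) h1 h2 h3 \<sigma> = (\<sigma> = a)"
      unfolding richardson_eq_def ratio rich[OF s] using assms(6,7)
      by (auto simp: powr_inj)
  qed
qed

end
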